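(* Let $k,l$ be positive integers. For $\operatorname{Re}s>1$, $$\sum_{n_{l+1}\mid n_l^k\mid\cdots\mid n_1^k}(n_1^k\cdots n_l^k\,n_{l+1})^{-s}=F_{k,l}(s)\prod_{j=2}^{l+1}\zeta(jks).$$
   Context: The sum is over all $(l+1)$-tuples of positive integers with $n_{l+1}\mid n_l^k\mid n_{l-1}^k\mid\cdots\mid n_1^k$. A positive integer $n$ is an $l$-step $k$-powerful number if for every prime $p$, $\operatorname{ord}_pn\in\{0,k,2k,\dots,(l-1)k\}$ or $\operatorname{ord}_pn\ge lk$ (here $\operatorname{ord}_pn$ is the exponent of $p$ in $n$). $F_{k,l}(s):=\sum_{n}n^{-s}$, summed over all $l$-step $k$-powerful numbers $n$. $\zeta$ is the Riemann zeta function. *)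

theory Defs
  imports "HOL-Analysis.Analysis" "HOL-Computational_Algebra.Primes"
begin

text \<open>Riemann zeta function on the half-plane Re s > 1, given by its Dirichlet series.\<close>
definition zeta :: "complex \<Rightarrow> complex" where
  "zeta s = (\<Sum>\<^sub>\<infinity> n\<in>{1::nat..}. of_nat n powr (-s))"

definition step_powerful :: "nat \<Rightarrow> nat \<Rightarrow> nat \<Rightarrow> bool" where
  "step_powerful k l n \<longleftrightarrow> n > 0 \<and>
     (\<forall>p::nat. prime p \<longrightarrow>
        (multiplicity p n \<in> {j * k | j. j < l} \<or> multiplicity p n \<ge> l * k))"

definition F :: "nat \<Rightarrow> nat \<Rightarrow> complex \<Rightarrow> complex" where
  "F k l s = (\<Sum>\<^sub>\<infinity> n\<in>{n. step_powerful k l n}. of_nat n powr (-s))"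

definition tuples :: "nat \<Rightarrow> nat \<Rightarrow> (nat \<Rightarrow> nat) set" where
  "tuples k l = {n \<in> {1..Suc l} \<rightarrow>\<^sub>E {1..}.
      n (Suc l) dvd n l ^ k \<and> (\<forall>i\<in>{2..l}. n i ^ k dvd n (i - 1) ^ k)}"

end

theory Submission
  imports Defs
begin

section \<open>Lifting local exponent maps to global maps on tuples\<close>

definition vecp :: "nat set \<Rightarrow> nat \<Rightarrow> (nat \<Rightarrow> nat) \<Rightarrow> (nat \<Rightarrow> nat)" where
  "vecp I p n = (\<lambda>i\<in>I. multiplicity p (n i))"

definition liftm :: "nat set \<Rightarrow> ((nat \<Rightarrow> nat) \<Rightarrow> (nat \<Rightarrow> nat)) \<Rightarrow> (nat \<Rightarrow> nat) \<Rightarrow> (nat \<Rightarrow> nat)" where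
  "liftm I \<phi> n = (\<lambda>i\<in>I. \<Prod>p\<in>(\<Union>j\<in>I. prime_factors (n j)). p ^ (\<phi> (vecp I p n) i))"

lemma liftm_mult:
  assumes "finite I" "\<phi> (\<lambda>i\<in>I. 0) = (\<lambda>i\<in>I. 0)" "\<And>i. i \<in> I \<Longrightarrow> n i > 0"
    "prime p" "i \<in> I"
  shows "multiplicity p (liftm I \<phi> n i) = \<phi> (vecp I p n) i"
proof -
  let ?S = "\<Union>j\<in>I. prime_factors (n j)"
  have fin: "finite ?S" using assms(1) by auto
  have pr: "\<And>x. x \<in> ?S \<Longrightarrow> prime x" by auto
  have "multiplicity p (liftm I \<phi> n i) = (if p \<in> ?S then \<phi> (vecp I p n) i else 0)"
    unfolding liftm_def using assms(5) multiplicity_prod_prime_powers[OF fin pr assms(4)] by simp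
  moreover have "\<phi> (vecp I p n) i = 0" if "p \<notin> ?S"
  proof -
    have "vecp I p n = (\<lambda>i\<in>I. 0)"
      unfolding vecp_def
    proof (rule restrict_ext)
      fix j assume j: "j \<in> I"
      then have "p \<notin> prime_factors (n j)" using that by auto
      then show "multiplicity p (n j) = 0"
        using assms(3)[OF j] assms(4) by (simp add: not_dvd_imp_multiplicity_0 prime_factors_dvd)
    qed
    then show ?thesis using assms(2) assms(5) by simp
  qed
  ultimately show ?thesis by auto
qed

lemma liftm_pos:
  assumes "finite I" "i \<in> I"
  shows "liftm I \<phi> n i > 0"
  unfolding liftm_def using assms
  by (auto intro!: prod_pos simp: prime_gt_0_nat in_prime_factors_imp_prime)

lemma liftm_ext: "liftm I \<phi> n \<in> extensional I"
  unfolding liftm_def by simp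

lemma vecp_liftm:
  assumes "finite I" "\<phi> (\<lambda>i\<in>I. 0) = (\<lambda>i\<in>I. 0)" "\<And>i. i \<in> I \<Longrightarrow> n i > 0"
    "prime p" "\<phi> (vecp I p n) \<in> extensional I"
  shows "vecp I p (liftm I \<phi> n) = \<phi> (vecp I p n)"
proof (rule extensionalityI[OF _ assms(5)])
  show "vecp I p (liftm I \<phi> n) \<in> extensional I" unfolding vecp_def by simp
  fix i assume "i \<in> I"
  then show "vecp I p (liftm I \<phi> n) i = \<phi> (vecp I p n) i"
  proof -
    have "vecp I p (liftm I \<phi> n) i = multiplicity p (liftm I \<phi> n i)"
      using \<open>i \<in> I\<close> by (simp add: vecp_def)
    then show ?thesis using liftm_mult[of I \<phi> n p i] assms \<open>i \<in> I\<close> by simp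
  qed
qed

lemma eq_by_vecp:
  assumes "n \<in> extensional I" "n' \<in> extensional I" "\<And>i. i \<in> I \<Longrightarrow> n i > 0"
    "\<And>i. i \<in> I \<Longrightarrow> n' i > 0" "\<And>p. prime p \<Longrightarrow> vecp I p n = vecp I p n'"
  shows "n = n'"
proof (rule extensionalityI[OF assms(1,2)])
  fix i assume i: "i \<in> I"
  show "n i = n' i"
  proof (rule multiplicity_eq_nat[OF assms(3)[OF i] assms(4)[OF i]])
    fix p :: nat assume "prime p"
    from assms(5)[OF this] have "vecp I p n i = vecp I p n' i" by simp
    then show "multiplicity p (n i) = multiplicity p (n' i)" using i by (simp add: vecp_def)
  qed
qed


definition globset :: "nat set \<Rightarrow> (nat \<Rightarrow> nat) set \<Rightarrow> (nat \<Rightarrow> nat) set" where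
  "globset I L = {n \<in> I \<rightarrow>\<^sub>E {1..}. \<forall>p. prime p \<longrightarrow> vecp I p n \<in> L}"

lemma globset_pos: "n \<in> globset I L \<Longrightarrow> i \<in> I \<Longrightarrow> n i > 0"
  unfolding globset_def by (auto simp: PiE_def Pi_def)

lemma liftm_maps:
  assumes "finite I" "\<phi> (\<lambda>i\<in>I. 0) = (\<lambda>i\<in>I. 0)" "\<And>a. a \<in> L \<Longrightarrow> \<phi> a \<in> R"
    "R \<subseteq> extensional I" "n \<in> globset I L"
  shows "liftm I \<phi> n \<in> globset I R"
    and "\<And>p. prime p \<Longrightarrow> vecp I p (liftm I \<phi> n) = \<phi> (vecp I p n)"
proof -
  have pos: "\<And>i. i \<in> I \<Longrightarrow> n i > 0" using globset_pos[OF assms(5)] .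
  have inL: "\<And>p. prime p \<Longrightarrow> vecp I p n \<in> L" using assms(5) by (simp add: globset_def)
  show vl: "\<And>p. prime p \<Longrightarrow> vecp I p (liftm I \<phi> n) = \<phi> (vecp I p n)"
    using vecp_liftm[of I \<phi> n, OF assms(1,2) pos] inL assms(3,4) by blast
  have "liftm I \<phi> n \<in> I \<rightarrow>\<^sub>E {1..}"
    using liftm_ext[of I \<phi> n] liftm_pos[OF assms(1)] by (auto simp: PiE_def Pi_def Suc_le_eq)
  then show "liftm I \<phi> n \<in> globset I R"
    unfolding globset_def using vl inL assms(3) by auto
qed

lemma liftm_inverse:
  assumes "finite I" "\<phi> (\<lambda>i\<in>I. 0) = (\<lambda>i\<in>I. 0)" "\<psi> (\<lambda>i\<in>I. 0) = (\<lambda>i\<in>I. 0)"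
    "\<And>a. a \<in> L \<Longrightarrow> \<phi> a \<in> R" "\<And>e. e \<in> R \<Longrightarrow> \<psi> e \<in> L"
    "\<And>a. a \<in> L \<Longrightarrow> \<psi> (\<phi> a) = a"
    "L \<subseteq> extensional I" "R \<subseteq> extensional I" "n \<in> globset I L"
  shows "liftm I \<psi> (liftm I \<phi> n) = n"
proof -
  have m1: "liftm I \<phi> n \<in> globset I R"
    and v1: "\<And>p. prime p \<Longrightarrow> vecp I p (liftm I \<phi> n) = \<phi> (vecp I p n)"
    using liftm_maps[of I \<phi> L R n, OF assms(1,2,4,8,9)] by auto
  have m2: "liftm I \<psi> (liftm I \<phi> n) \<in> globset I L"
    and v2: "\<And>p. prime p \<Longrightarrow> vecp I p (liftm I \<psi> (liftm I \<phi> n)) = \<psi> (vecp I p (liftm I \<phi> n))"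
    using liftm_maps[of I \<psi> R L "liftm I \<phi> n", OF assms(1,3,5,7) m1] by auto
  have inL: "\<And>p. prime p \<Longrightarrow> vecp I p n \<in> L" using assms(9) by (simp add: globset_def)
  show ?thesis
  proof (rule eq_by_vecp[of _ I])
    show "liftm I \<psi> (liftm I \<phi> n) \<in> extensional I" by (rule liftm_ext)
    show "n \<in> extensional I" using assms(9) by (auto simp: globset_def PiE_def)
    show "\<And>i. i \<in> I \<Longrightarrow> 0 < liftm I \<psi> (liftm I \<phi> n) i" using liftm_pos[OF assms(1)] .
    show "\<And>i. i \<in> I \<Longrightarrow> 0 < n i" using globset_pos[OF assms(9)] .
    fix p :: nat assume "prime p"
    then show "vecp I p (liftm I \<psi> (liftm I \<phi> n)) = vecp I p n"
      using v1 v2 inL assms(6) by simp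
  qed
qed

lemma liftm_bij:
  assumes "finite I" "\<phi> (\<lambda>i\<in>I. 0) = (\<lambda>i\<in>I. 0)" "\<psi> (\<lambda>i\<in>I. 0) = (\<lambda>i\<in>I. 0)"
    "\<And>a. a \<in> L \<Longrightarrow> \<phi> a \<in> R" "\<And>e. e \<in> R \<Longrightarrow> \<psi> e \<in> L"
    "\<And>a. a \<in> L \<Longrightarrow> \<psi> (\<phi> a) = a" "\<And>e. e \<in> R \<Longrightarrow> \<phi> (\<psi> e) = e"
    "L \<subseteq> extensional I" "R \<subseteq> extensional I"
  shows "bij_betw (liftm I \<phi>) (globset I L) (globset I R)"
proof (rule bij_betw_byWitness[where f' = "liftm I \<psi>"])
  show "\<forall>a\<in>globset I L. liftm I \<psi> (liftm I \<phi> a) = a"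
    using liftm_inverse[of I \<phi> \<psi> L R, OF assms(1,2,3,4,5,6,8,9)] by blast
  show "\<forall>a\<in>globset I R. liftm I \<phi> (liftm I \<psi> a) = a"
    using liftm_inverse[of I \<psi> \<phi> R L, OF assms(1,3,2,5,4,7,9,8)] by blast
  show "liftm I \<phi> ` globset I L \<subseteq> globset I R"
    using liftm_maps(1)[of I \<phi> L R, OF assms(1,2,4,9)] by blast
  show "liftm I \<psi> ` globset I R \<subseteq> globset I L"
    using liftm_maps(1)[of I \<psi> R L, OF assms(1,3,5,8)] by blast
qed


section \<open>Local combinatorics\<close>

lemma sum_double_triangle:
  "(\<Sum>i\<in>{1..N}. \<Sum>j\<in>{i..N}. f j) = (\<Sum>j\<in>{1..N}. j * (f j :: nat))"
proof (induction N)
  case 0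
  then show ?case by simp
next
  case (Suc N)
  have "(\<Sum>i\<in>{1..Suc N}. \<Sum>j\<in>{i..Suc N}. f j) = (\<Sum>i\<in>{1..Suc N}. (\<Sum>j\<in>{i..N}. f j) + f (Suc N))"
    by (intro sum.cong) auto
  also have "\<dots> = (\<Sum>i\<in>{1..Suc N}. \<Sum>j\<in>{i..N}. f j) + Suc N * f (Suc N)"
    by (simp add: sum.distrib)
  also have "(\<Sum>i\<in>{1..Suc N}. \<Sum>j\<in>{i..N}. f j) = (\<Sum>i\<in>{1..N}. \<Sum>j\<in>{i..N}. f j)"
    by simp
  finally show ?case using Suc by simp
qed

definition Lset :: "nat \<Rightarrow> nat \<Rightarrow> (nat \<Rightarrow> nat) set" where
  "Lset k l = {a \<in> extensional {1..Suc l}. (\<forall>i\<in>{2..l}. a i \<le> a (i - 1)) \<and> a (Suc l) \<le> k * a l}"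

definition Rset :: "nat \<Rightarrow> nat \<Rightarrow> (nat \<Rightarrow> nat) set" where
  "Rset k l = {e \<in> extensional {1..Suc l}. e 1 \<in> {j * k | j. j < l} \<or> e 1 \<ge> l * k}"

definition mphi :: "nat \<Rightarrow> nat \<Rightarrow> (nat \<Rightarrow> nat) \<Rightarrow> nat \<Rightarrow> nat" where
  "mphi k l a i = (if i \<le> l then a i - (if a (Suc l) mod k = 0 then 0 else 1)
     else if i = Suc l then a (Suc l) div k else 0)"

definition phiL :: "nat \<Rightarrow> nat \<Rightarrow> (nat \<Rightarrow> nat) \<Rightarrow> (nat \<Rightarrow> nat)" where
  "phiL k l a = (\<lambda>j\<in>{1..Suc l}. if j = 1 then k * (mphi k l a 1 - mphi k l a 2) +
      (if a (Suc l) mod k = 0 then 0 else l * k + a (Suc l) mod k)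
    else mphi k l a j - mphi k l a (Suc j))"

definition tpsi :: "nat \<Rightarrow> nat \<Rightarrow> (nat \<Rightarrow> nat) \<Rightarrow> nat" where
  "tpsi k l e = (if e 1 mod k = 0 then e 1 div k else (e 1 - l * k) div k)"

definition epsi :: "nat \<Rightarrow> nat \<Rightarrow> (nat \<Rightarrow> nat) \<Rightarrow> nat \<Rightarrow> nat" where
  "epsi k l e j = (if j = 1 then tpsi k l e else e j)"

definition Mpsi :: "nat \<Rightarrow> nat \<Rightarrow> (nat \<Rightarrow> nat) \<Rightarrow> nat \<Rightarrow> nat" where
  "Mpsi k l e i = (\<Sum>j\<in>{i..Suc l}. epsi k l e j)"

definition psiR :: "nat \<Rightarrow> nat \<Rightarrow> (nat \<Rightarrow> nat) \<Rightarrow> (nat \<Rightarrow> nat)" where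
  "psiR k l e = (\<lambda>i\<in>{1..Suc l}. if i \<le> l then Mpsi k l e i + (if e 1 mod k = 0 then 0 else 1)
     else k * Mpsi k l e (Suc l) + e 1 mod k)"

definition wL :: "nat \<Rightarrow> nat \<Rightarrow> (nat \<Rightarrow> nat) \<Rightarrow> nat" where
  "wL k l a = (\<Sum>i\<in>{1..l}. k * a i) + a (Suc l)"

definition wR :: "nat \<Rightarrow> nat \<Rightarrow> (nat \<Rightarrow> nat) \<Rightarrow> nat" where
  "wR k l e = e 1 + (\<Sum>j\<in>{2..Suc l}. j * k * e j)"

context
  fixes k l :: nat
  assumes kpos: "k > 0" and lpos: "l > 0"
begin

lemma Mpsi_step: "i \<le> Suc l \<Longrightarrow> Mpsi k l e i = epsi k l e i + Mpsi k l e (Suc i)"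
  unfolding Mpsi_def by (subst sum.atLeast_Suc_atMost) auto

lemma Mpsi_end: "Mpsi k l e (Suc (Suc l)) = 0"
  unfolding Mpsi_def by simp

lemma E1:
  assumes "e \<in> Rset k l"
  shows "e 1 = k * tpsi k l e + (if e 1 mod k = 0 then 0 else l * k + e 1 mod k)"
proof (cases "e 1 mod k = 0")
  case True
  then show ?thesis unfolding tpsi_def by (metis add.right_neutral mult_div_mod_eq)
next
  case False
  have "e 1 \<notin> {j * k | j. j < l}" using False by auto
  then have ge: "e 1 \<ge> l * k" using assms by (auto simp: Rset_def)
  have "(e 1 - l * k) mod k = e 1 mod k"
    by (metis ge le_add_diff_inverse mod_mult_self3)
  then have "e 1 - l * k = k * ((e 1 - l * k) div k) + e 1 mod k"
    by (metis mult_div_mod_eq)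
  then show ?thesis using False ge unfolding tpsi_def by simp
qed

lemma L_antitone:
  assumes "a \<in> Lset k l" "1 \<le> i" "i \<le> j" "j \<le> l"
  shows "a j \<le> a i"
  using assms(3)
proof (induction rule: inc_induct)
  case base
  then show ?case by simp
next
  case (step n)
  have "Suc n \<in> {2..l}" using step.hyps assms(2,4) by auto
  have "\<forall>i\<in>{2..l}. a i \<le> a (i - 1)" using assms(1) by (simp add: Lset_def)
  then have "a (Suc n) \<le> a (Suc n - 1)" using \<open>Suc n \<in> {2..l}\<close> by blast
  then have "a (Suc n) \<le> a n" by simp
  then show ?case using step.IH by simp
qed

lemma L_last:
  assumes "a \<in> Lset k l"
  shows "a (Suc l) div k \<le> a l - (if a (Suc l) mod k = 0 then 0 else 1)"
proof -
  have le: "a (Suc l) \<le> k * a l" using assms by (simp add: Lset_def)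
  have d: "k * (a (Suc l) div k) + a (Suc l) mod k = a (Suc l)" by simp
  show ?thesis
  proof (cases "a (Suc l) mod k = 0")
    case True
    then have "k * (a (Suc l) div k) \<le> k * a l" using le d by linarith
    then show ?thesis using True kpos by simp
  next
    case False
    then have "k * (a (Suc l) div k) < k * a l" using le d by linarith
    then have "a (Suc l) div k < a l" using kpos by simp
    then show ?thesis using False by simp
  qed
qed

lemma L_delta:
  assumes "a \<in> Lset k l" "1 \<le> i" "i \<le> l"
  shows "a i \<ge> (if a (Suc l) mod k = 0 then 0 else 1)"
proof (cases "a (Suc l) mod k = 0")
  case False
  then have "a (Suc l) > 0" by (metis mod_0 neq0_conv)
  then have "a l > 0" using assms(1) by (simp add: Lset_def) (metis mult_0_right not_le order_refl le_zero_eq)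
  then show ?thesis using L_antitone[OF assms(1,2,3)] by simp
qed simp

lemma mphi_antitone:
  assumes "a \<in> Lset k l" "1 \<le> i" "i \<le> Suc l"
  shows "mphi k l a (Suc i) \<le> mphi k l a i"
proof -
  consider "Suc i \<le> l" | "i = l" | "i = Suc l" using assms by linarith
  then show ?thesis
  proof cases
    case 1
    then have "a (Suc i) \<le> a i" using L_antitone[OF assms(1) assms(2)] by simp
    then show ?thesis using 1 unfolding mphi_def by simp
  next
    case 2
    then show ?thesis using L_last[OF assms(1)] unfolding mphi_def by simp
  next
    case 3
    then show ?thesis unfolding mphi_def by simp
  qed
qed

lemma mphi_telescope:
  assumes "a \<in> Lset k l" "1 \<le> i" "i \<le> Suc l"
  shows "(\<Sum>j\<in>{i..Suc l}. mphi k l a j - mphi k l a (Suc j)) = mphi k l a i"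
proof -
  have "int (\<Sum>j\<in>{i..Suc l}. mphi k l a j - mphi k l a (Suc j)) =
        (\<Sum>j\<in>{i..Suc l}. int (mphi k l a j) - int (mphi k l a (Suc j)))"
    unfolding of_nat_sum using mphi_antitone[OF assms(1)] assms(2)
    by (intro sum.cong) (auto simp: of_nat_diff)
  also have "\<dots> = - (\<Sum>j\<in>{i..Suc l}. int (mphi k l a (Suc j)) - int (mphi k l a j))"
    by (simp add: sum_negf[symmetric])
  also have "\<dots> = int (mphi k l a i) - int (mphi k l a (Suc (Suc l)))"
    using assms(3) by (subst sum_Suc_diff) auto
  also have "mphi k l a (Suc (Suc l)) = 0" unfolding mphi_def by simp
  finally show ?thesis by simp
qed


lemma phiL_1:
  "phiL k l a 1 = k * (mphi k l a 1 - mphi k l a 2) +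
      (if a (Suc l) mod k = 0 then 0 else l * k + a (Suc l) mod k)"
  unfolding phiL_def by simp

lemma phiL_j: "j \<in> {2..Suc l} \<Longrightarrow> phiL k l a j = mphi k l a j - mphi k l a (Suc j)"
  unfolding phiL_def by auto

lemma mod_lemma: "r < k \<Longrightarrow> (k * x + (l * k + r)) mod k = r"
proof -
  assume "r < k"
  have "k * x + (l * k + r) = r + (x + l) * k" by (simp add: algebra_simps)
  then show ?thesis using \<open>r < k\<close> by simp
qed

lemma div_lemma: "r < k \<Longrightarrow> (k * x + (l * k + r) - l * k) div k = x"
proof -
  assume "r < k"
  have "k * x + (l * k + r) - l * k = r + x * k" by (simp add: algebra_simps)
  then show ?thesis using \<open>r < k\<close> by simp
qed

lemma phiL_mod: "phiL k l a 1 mod k = a (Suc l) mod k"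
  unfolding phiL_1 using kpos by (auto simp: mod_lemma)

lemma tpsi_phiL: "tpsi k l (phiL k l a) = mphi k l a 1 - mphi k l a 2"
  unfolding tpsi_def phiL_mod unfolding phiL_1 using kpos by (auto simp: div_lemma)

lemma epsi_phiL: "j \<in> {1..Suc l} \<Longrightarrow> epsi k l (phiL k l a) j = mphi k l a j - mphi k l a (Suc j)"
  unfolding epsi_def using tpsi_phiL phiL_j by (cases "j = 1") (auto simp: numeral_2_eq_2)

lemma Mpsi_phiL:
  assumes "a \<in> Lset k l" "1 \<le> i" "i \<le> Suc l"
  shows "Mpsi k l (phiL k l a) i = mphi k l a i"
proof -
  have "Mpsi k l (phiL k l a) i = (\<Sum>j\<in>{i..Suc l}. mphi k l a j - mphi k l a (Suc j))"
    unfolding Mpsi_def using assms(2) by (intro sum.cong) (auto simp: epsi_phiL)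
  also have "\<dots> = mphi k l a i" by (rule mphi_telescope[OF assms])
  finally show ?thesis .
qed

lemma psi_phi:
  assumes "a \<in> Lset k l"
  shows "psiR k l (phiL k l a) = a"
proof (rule extensionalityI[where A = "{1..Suc l}"])
  show "psiR k l (phiL k l a) \<in> extensional {1..Suc l}" unfolding psiR_def by simp
  show "a \<in> extensional {1..Suc l}" using assms by (simp add: Lset_def)
  fix i assume i: "i \<in> {1..Suc l}"
  show "psiR k l (phiL k l a) i = a i"
  proof (cases "i \<le> l")
    case True
    then show ?thesis using i Mpsi_phiL[OF assms, of i] L_delta[OF assms, of i]
      unfolding psiR_def phiL_mod by (auto simp: mphi_def)
  next
    case False
    then have "i = Suc l" using i by auto
    then show ?thesis using Mpsi_phiL[OF assms, of "Suc l"]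
      unfolding psiR_def phiL_mod by (simp add: mphi_def)
  qed
qed


lemma psiR_last: "psiR k l e (Suc l) = k * Mpsi k l e (Suc l) + e 1 mod k"
  unfolding psiR_def by simp

lemma psiR_mod: "psiR k l e (Suc l) mod k = e 1 mod k"
  unfolding psiR_last using kpos by simp

lemma psiR_div: "psiR k l e (Suc l) div k = Mpsi k l e (Suc l)"
  unfolding psiR_last using kpos by simp

lemma mphi_psiR:
  assumes "1 \<le> i" "i \<le> Suc (Suc l)"
  shows "mphi k l (psiR k l e) i = Mpsi k l e i"
proof -
  consider "i \<le> l" | "i = Suc l" | "i = Suc (Suc l)" using assms by linarith
  then show ?thesis
  proof cases
    case 1
    then show ?thesis using assms unfolding mphi_def psiR_mod by (simp add: psiR_def)
  next
    case 2
    then show ?thesis unfolding mphi_def psiR_div by simp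
  next
    case 3
    then show ?thesis unfolding mphi_def by (simp add: Mpsi_end)
  qed
qed

lemma phi_psi:
  assumes "e \<in> Rset k l"
  shows "phiL k l (psiR k l e) = e"
proof (rule extensionalityI[where A = "{1..Suc l}"])
  show "phiL k l (psiR k l e) \<in> extensional {1..Suc l}" unfolding phiL_def by simp
  show "e \<in> extensional {1..Suc l}" using assms by (simp add: Rset_def)
  fix j assume j: "j \<in> {1..Suc l}"
  show "phiL k l (psiR k l e) j = e j"
  proof (cases "j = 1")
    case True
    have "mphi k l (psiR k l e) 1 - mphi k l (psiR k l e) 2 = tpsi k l e"
      using mphi_psiR[of 1] mphi_psiR[of 2] Mpsi_step[of 1 e]
      by (simp add: epsi_def numeral_2_eq_2)
    then have "phiL k l (psiR k l e) 1 = e 1" using E1[OF assms] unfolding phiL_1 psiR_mod by simp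
    then show ?thesis using True by simp
  next
    case False
    then have j2: "j \<in> {2..Suc l}" using j by auto
    have "mphi k l (psiR k l e) j - mphi k l (psiR k l e) (Suc j) = epsi k l e j"
      using mphi_psiR[of j] mphi_psiR[of "Suc j"] Mpsi_step[of j e] j2 by simp
    then show ?thesis using phiL_j[OF j2] False by (simp add: epsi_def)
  qed
qed


lemma phiL_R:
  assumes "a \<in> Lset k l"
  shows "phiL k l a \<in> Rset k l"
proof -
  define x where "x = mphi k l a 1 - mphi k l a 2"
  have e1: "phiL k l a 1 = k * x + (if a (Suc l) mod k = 0 then 0 else l * k + a (Suc l) mod k)"
    unfolding phiL_1 x_def by simp
  have "phiL k l a 1 \<in> {j * k | j. j < l} \<or> phiL k l a 1 \<ge> l * k"
  proof (cases "a (Suc l) mod k = 0")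
    case True
    show ?thesis
    proof (cases "x < l")
      case True
      then show ?thesis using e1 \<open>a (Suc l) mod k = 0\<close> by (auto simp: mult.commute)
    next
      case False
      then have "l * k \<le> x * k" by simp
      then show ?thesis using e1 by (simp add: mult.commute)
    qed
  next
    case False
    then show ?thesis using e1 by simp
  qed
  then show ?thesis unfolding Rset_def phiL_def by simp
qed

lemma psiR_low: "1 \<le> i \<Longrightarrow> i \<le> l \<Longrightarrow> psiR k l e i = Mpsi k l e i + (if e 1 mod k = 0 then 0 else 1)"
  unfolding psiR_def by simp

lemma psiR_L:
  assumes "e \<in> Rset k l"
  shows "psiR k l e \<in> Lset k l"
proof -
  have A: "\<forall>i\<in>{2..l}. psiR k l e i \<le> psiR k l e (i - 1)"
  proof
    fix i assume i: "i \<in> {2..l}"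
    have le: "i - 1 \<le> Suc l" and si: "Suc (i - 1) = i" using i by auto
    have "Mpsi k l e (i - 1) = epsi k l e (i - 1) + Mpsi k l e i"
      using Mpsi_step[OF le, of e] unfolding si .
    moreover have "1 \<le> i - 1" "i - 1 \<le> l" "1 \<le> i" "i \<le> l" using i by auto
    ultimately show "psiR k l e i \<le> psiR k l e (i - 1)" using psiR_low by simp
  qed
  have B: "psiR k l e (Suc l) \<le> k * psiR k l e l"
  proof -
    have M: "Mpsi k l e l = epsi k l e l + Mpsi k l e (Suc l)" using Mpsi_step[of l e] by simp
    have pl: "psiR k l e l = Mpsi k l e l + (if e 1 mod k = 0 then 0 else 1)"
      unfolding psiR_def using lpos by simp
    show ?thesis
    proof (cases "e 1 mod k = 0")
      case True
      then show ?thesis unfolding psiR_last pl using M by simp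
    next
      case False
      have "e 1 mod k < k" using kpos by simp
      then have "k * Mpsi k l e (Suc l) + e 1 mod k \<le> k * (Mpsi k l e (Suc l) + 1)" by simp
      also have "\<dots> \<le> k * (Mpsi k l e l + 1)" using M by simp
      finally show ?thesis unfolding psiR_last pl using False by simp
    qed
  qed
  show ?thesis unfolding Lset_def using A B by (simp add: psiR_def)
qed

lemma phiL_zero: "phiL k l (\<lambda>i\<in>{1..Suc l}. 0) = (\<lambda>i\<in>{1..Suc l}. 0)"
  unfolding phiL_def mphi_def by (intro restrict_ext) auto

lemma psiR_zero: "psiR k l (\<lambda>i\<in>{1..Suc l}. 0) = (\<lambda>i\<in>{1..Suc l}. 0)"
proof -
  have "Mpsi k l (\<lambda>i\<in>{1..Suc l}. 0) i = 0" if "1 \<le> i" for i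
    unfolding Mpsi_def epsi_def tpsi_def using that by (intro sum.neutral) auto
  then show ?thesis unfolding psiR_def by (intro restrict_ext) auto
qed

lemma weight_psiR:
  assumes "e \<in> Rset k l"
  shows "wL k l (psiR k l e) = wR k l e"
proof -
  define \<delta> where "\<delta> = (if e 1 mod k = 0 then 0 else 1::nat)"
  define r where "r = e 1 mod k"
  define M where "M = Mpsi k l e"
  define S where "S = (\<Sum>j\<in>{2..Suc l}. j * e j)"
  define t where "t = tpsi k l e"
  have E: "e 1 = k * t + (if e 1 mod k = 0 then 0 else l * k + e 1 mod k)"
    using E1[OF assms] unfolding t_def .
  have e1: "e 1 = k * t + \<delta> * (l * k) + r"
  proof (cases "e 1 mod k = 0")
    case True
    have d: "\<delta> = 0" "r = 0" using True unfolding \<delta>_def r_def by simp_all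
    from E have "e 1 = k * t + 0" unfolding if_P[OF True] .
    then show ?thesis unfolding d by simp
  next
    case False
    have d: "\<delta> = 1" "r = e 1 mod k" using False unfolding \<delta>_def r_def by simp_all
    from E have h: "e 1 = k * t + (l * k + e 1 mod k)" unfolding if_not_P[OF False] .
    show ?thesis unfolding d mult_1 add.assoc by (rule h)
  qed
  have A: "wL k l (psiR k l e) = (\<Sum>i\<in>{1..l}. k * (M i + \<delta>)) + (k * M (Suc l) + r)"
    unfolding wL_def psiR_last r_def \<delta>_def M_def using psiR_low by simp
  have B1: "(\<Sum>i\<in>{1..l}. k * (M i + \<delta>)) = k * (\<Sum>i\<in>{1..l}. M i) + k * l * \<delta>"
    by (simp add: sum.distrib sum_distrib_left distrib_left)
  have B2: "(\<Sum>i\<in>{1..Suc l}. M i) = (\<Sum>i\<in>{1..l}. M i) + M (Suc l)"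
    by simp
  have C: "(\<Sum>i\<in>{1..Suc l}. M i) = (\<Sum>j\<in>{1..Suc l}. j * epsi k l e j)"
    unfolding M_def Mpsi_def by (rule sum_double_triangle)
  have D: "(\<Sum>j\<in>{1..Suc l}. j * epsi k l e j) = t + S"
    unfolding S_def t_def
    by (subst sum.atLeast_Suc_atMost) (auto simp: epsi_def numeral_2_eq_2 intro!: sum.cong)
  have E: "(\<Sum>j\<in>{2..Suc l}. j * k * e j) = k * S"
    unfolding S_def sum_distrib_left by (intro sum.cong) auto
  have F: "(\<Sum>i\<in>{1..Suc l}. M i) = t + S" using C D by simp
  have "wL k l (psiR k l e) = k * (\<Sum>i\<in>{1..l}. M i) + k * l * \<delta> + (k * M (Suc l) + r)"
    using A B1 by simp
  also have "\<dots> = k * (\<Sum>i\<in>{1..Suc l}. M i) + k * l * \<delta> + r"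
    unfolding B2 by (simp add: distrib_left)
  also have "\<dots> = k * (t + S) + k * l * \<delta> + r" unfolding F ..
  also have "\<dots> = e 1 + (\<Sum>j\<in>{2..Suc l}. j * k * e j)"
    unfolding E e1 by (simp add: distrib_left)
  finally show ?thesis unfolding wR_def .
qed

lemma weight_phiL:
  assumes "a \<in> Lset k l"
  shows "wR k l (phiL k l a) = wL k l a"
  using weight_psiR[OF phiL_R[OF assms]] psi_phi[OF assms] by simp

end


lemma dvd_iff_mult:
  fixes x y :: nat
  assumes "x > 0" "y > 0"
  shows "x dvd y \<longleftrightarrow> (\<forall>p. prime p \<longrightarrow> multiplicity p x \<le> multiplicity p y)"
  using assms by (auto intro: multiplicity_le_imp_dvd dvd_imp_multiplicity_le)

lemma mult_pow: "prime p \<Longrightarrow> (x::nat) > 0 \<Longrightarrow> multiplicity p (x ^ k) = k * multiplicity p x"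
  by (simp add: prime_elem_multiplicity_power_distrib)

lemma vecp_at: "i \<in> I \<Longrightarrow> vecp I p n i = multiplicity p (n i)"
  by (simp add: vecp_def)

lemma tuples_eq:
  assumes "k > 0" "l > 0"
  shows "tuples k l = globset {1..Suc l} (Lset k l)"
proof (intro set_eqI iffI)
  fix n assume n: "n \<in> tuples k l"
  then have pe: "n \<in> {1..Suc l} \<rightarrow>\<^sub>E {1..}" by (simp add: tuples_def)
  then have pos: "\<And>i. i \<in> {1..Suc l} \<Longrightarrow> n i > 0" by (auto simp: PiE_def Pi_def)
  have d1: "n (Suc l) dvd n l ^ k" and d2: "\<And>i. i \<in> {2..l} \<Longrightarrow> n i ^ k dvd n (i - 1) ^ k"
    using n by (auto simp: tuples_def)
  have "vecp {1..Suc l} p n \<in> Lset k l" if p: "prime p" for p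
  proof -
    have "multiplicity p (n i) \<le> multiplicity p (n (i - 1))" if i: "i \<in> {2..l}" for i
    proof -
      have "i - 1 \<in> {1..Suc l}" "i \<in> {1..Suc l}" using i by auto
      then have pi: "n i > 0" "n (i - 1) > 0" using pos by auto
      have "multiplicity p (n i ^ k) \<le> multiplicity p (n (i - 1) ^ k)"
        using d2[OF i] pi by (intro dvd_imp_multiplicity_le) auto
      then show ?thesis using mult_pow[OF p, of "n i" k] mult_pow[OF p, of "n (i - 1)" k]
          pi assms(1) by auto
    qed
    moreover have "multiplicity p (n (Suc l)) \<le> k * multiplicity p (n l)"
      using dvd_imp_multiplicity_le[OF d1, of p] pos[of l] mult_pow[OF p, of "n l" k] assms(2) by auto
    ultimately show ?thesis unfolding Lset_def using assms(2) by (auto simp: vecp_def)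
  qed
  then show "n \<in> globset {1..Suc l} (Lset k l)" using pe by (simp add: globset_def)
next
  fix n assume n: "n \<in> globset {1..Suc l} (Lset k l)"
  then have pe: "n \<in> {1..Suc l} \<rightarrow>\<^sub>E {1..}" by (simp add: globset_def)
  then have pos: "\<And>i. i \<in> {1..Suc l} \<Longrightarrow> n i > 0" by (auto simp: PiE_def Pi_def)
  have L: "\<And>p. prime p \<Longrightarrow> vecp {1..Suc l} p n \<in> Lset k l" using n by (simp add: globset_def)
  have d1: "n (Suc l) dvd n l ^ k"
  proof (rule multiplicity_le_imp_dvd)
    show "n (Suc l) \<noteq> 0" using pos[of "Suc l"] by simp
    fix p :: nat assume p: "prime p"
    have "vecp {1..Suc l} p n (Suc l) \<le> k * vecp {1..Suc l} p n l"
      using L[OF p] by (simp add: Lset_def)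
    then show "multiplicity p (n (Suc l)) \<le> multiplicity p (n l ^ k)"
      using mult_pow[OF p, of "n l" k] pos[of l] assms(2) by (simp add: vecp_def)
  qed
  have d2: "n i ^ k dvd n (i - 1) ^ k" if i: "i \<in> {2..l}" for i
  proof (rule multiplicity_le_imp_dvd)
    show "n i ^ k \<noteq> 0" using pos[of i] i by simp
    fix p :: nat assume p: "prime p"
    have "vecp {1..Suc l} p n i \<le> vecp {1..Suc l} p n (i - 1)"
      using L[OF p] i by (simp add: Lset_def)
    moreover have "i - 1 \<in> {1..Suc l}" "i \<in> {1..Suc l}" using i by auto
    moreover then have pi: "n i > 0" "n (i - 1) > 0" using pos by auto
    ultimately show "multiplicity p (n i ^ k) \<le> multiplicity p (n (i - 1) ^ k)"
      using mult_pow[OF p, of "n i" k] mult_pow[OF p, of "n (i - 1)" k]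
      by (simp add: vecp_def)
  qed
  show "n \<in> tuples k l" unfolding tuples_def using pe d1 d2 by simp
qed

definition Bset :: "nat \<Rightarrow> nat \<Rightarrow> nat \<Rightarrow> nat set" where
  "Bset k l j = (if j = 1 then {m. step_powerful k l m} else {1..})"

lemma PiE_eq:
  assumes "k > 0" "l > 0"
  shows "PiE {1..Suc l} (Bset k l) = globset {1..Suc l} (Rset k l)"
proof (intro set_eqI iffI)
  fix g assume g: "g \<in> PiE {1..Suc l} (Bset k l)"
  then have sp: "step_powerful k l (g 1)" by (auto simp: PiE_def Pi_def Bset_def)
  have pe: "g \<in> {1..Suc l} \<rightarrow>\<^sub>E {1..}"
    using g sp by (auto simp: PiE_def Pi_def Bset_def step_powerful_def Suc_le_eq split: if_splits)
  have "vecp {1..Suc l} p g \<in> Rset k l" if "prime p" for p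
    using sp that unfolding Rset_def step_powerful_def by (simp add: vecp_def)
  then show "g \<in> globset {1..Suc l} (Rset k l)" using pe by (simp add: globset_def)
next
  fix g assume g: "g \<in> globset {1..Suc l} (Rset k l)"
  then have pe: "g \<in> {1..Suc l} \<rightarrow>\<^sub>E {1..}" by (simp add: globset_def)
  have R: "\<And>p. prime p \<Longrightarrow> vecp {1..Suc l} p g \<in> Rset k l" using g by (simp add: globset_def)
  have "g 1 > 0" using pe by (auto simp: PiE_def Pi_def)
  moreover have "multiplicity p (g 1) \<in> {j * k | j. j < l} \<or> multiplicity p (g 1) \<ge> l * k"
    if "prime p" for p using R[OF that] by (simp add: Rset_def vecp_def)
  ultimately have "step_powerful k l (g 1)" by (simp add: step_powerful_def)
  then show "g \<in> PiE {1..Suc l} (Bset k l)" using pe by (auto simp: PiE_def Pi_def Bset_def)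
qed


section \<open>Weights\<close>

lemma mult_WT:
  assumes "l > 0" "\<And>i. i \<in> {1..Suc l} \<Longrightarrow> n i > 0" "prime p"
  shows "multiplicity p ((\<Prod>i\<in>{1..l}. n i ^ k) * n (Suc l)) = wL k l (vecp {1..Suc l} p n)"
proof -
  have pos: "\<forall>i\<in>{1..l}. n i > 0" using assms(2) by auto
  have "multiplicity p ((\<Prod>i\<in>{1..l}. n i ^ k) * n (Suc l)) =
        multiplicity p (\<Prod>i\<in>{1..l}. n i ^ k) + multiplicity p (n (Suc l))"
    using pos assms(2)[of "Suc l"] assms(3)
    by (intro prime_elem_multiplicity_mult_distrib) (auto simp: prod_zero_iff)
  also have "multiplicity p (\<Prod>i\<in>{1..l}. n i ^ k) = (\<Sum>i\<in>{1..l}. multiplicity p (n i ^ k))"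
    using pos assms(3) by (intro prime_elem_multiplicity_prod_distrib) auto
  also have "\<dots> = (\<Sum>i\<in>{1..l}. k * vecp {1..Suc l} p (n) i)"
    using pos assms(3) by (intro sum.cong) (auto simp: mult_pow vecp_def)
  finally show ?thesis unfolding wL_def by (simp add: vecp_def)
qed

definition cc :: "nat \<Rightarrow> nat \<Rightarrow> nat" where
  "cc k j = (if j = 1 then 1 else j * k)"

lemma mult_WD:
  assumes "\<And>i. i \<in> {1..Suc l} \<Longrightarrow> g i > 0" "prime p"
  shows "multiplicity p (\<Prod>j\<in>{1..Suc l}. g j ^ cc k j) = wR k l (vecp {1..Suc l} p g)"
proof -
  have pos: "\<forall>i\<in>{1..Suc l}. g i > 0" using assms(1) by auto
  have "multiplicity p (\<Prod>j\<in>{1..Suc l}. g j ^ cc k j) = (\<Sum>j\<in>{1..Suc l}. multiplicity p (g j ^ cc k j))"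
    using pos assms(2) by (intro prime_elem_multiplicity_prod_distrib) auto
  also have "\<dots> = (\<Sum>j\<in>{1..Suc l}. cc k j * vecp {1..Suc l} p g j)"
    using pos assms(2) by (intro sum.cong) (auto simp: mult_pow vecp_def)
  also have "\<dots> = cc k 1 * vecp {1..Suc l} p g 1 + (\<Sum>j\<in>{2..Suc l}. cc k j * vecp {1..Suc l} p g j)"
    by (subst sum.atLeast_Suc_atMost) (auto simp: numeral_2_eq_2)
  also have "(\<Sum>j\<in>{2..Suc l}. cc k j * vecp {1..Suc l} p g j) = (\<Sum>j\<in>{2..Suc l}. j * k * vecp {1..Suc l} p g j)"
    by (intro sum.cong) (auto simp: cc_def)
  finally show ?thesis unfolding wR_def by (simp add: cc_def)
qed

lemma weight_transfer:
  assumes "k > 0" "l > 0" "n \<in> globset {1..Suc l} (Lset k l)"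
  shows "(\<Prod>i\<in>{1..l}. n i ^ k) * n (Suc l) =
         (\<Prod>j\<in>{1..Suc l}. liftm {1..Suc l} (phiL k l) n j ^ cc k j)"
proof -
  let ?g = "liftm {1..Suc l} (phiL k l) n"
  have z: "phiL k l (\<lambda>i\<in>{1..Suc l}. 0) = (\<lambda>i\<in>{1..Suc l}. 0)" using phiL_zero[OF assms(1,2)] .
  have R: "\<And>a. a \<in> Lset k l \<Longrightarrow> phiL k l a \<in> Rset k l" using phiL_R[OF assms(1,2)] .
  have ext: "Rset k l \<subseteq> extensional {1..Suc l}" by (auto simp: Rset_def)
  have v: "\<And>p. prime p \<Longrightarrow> vecp {1..Suc l} p ?g = phiL k l (vecp {1..Suc l} p n)"
    using liftm_maps(2)[of "{1..Suc l}" "phiL k l" "Lset k l" "Rset k l" n, OF _ z R ext assms(3)] by simp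
  have inL: "\<And>p. prime p \<Longrightarrow> vecp {1..Suc l} p n \<in> Lset k l" using assms(3) by (simp add: globset_def)
  have posn: "\<And>i. i \<in> {1..Suc l} \<Longrightarrow> n i > 0" using globset_pos[OF assms(3)] .
  have posg: "\<And>i. i \<in> {1..Suc l} \<Longrightarrow> ?g i > 0" using liftm_pos[of "{1..Suc l}"] by simp
  show ?thesis
  proof (rule multiplicity_eq_nat)
    show "0 < (\<Prod>i\<in>{1..l}. n i ^ k) * n (Suc l)" using posn by (auto intro!: prod_pos)
    show "0 < (\<Prod>j\<in>{1..Suc l}. ?g j ^ cc k j)" using posg by (auto intro!: prod_pos)
    fix p :: nat assume p: "prime p"
    show "multiplicity p ((\<Prod>i\<in>{1..l}. n i ^ k) * n (Suc l)) = multiplicity p (\<Prod>j\<in>{1..Suc l}. ?g j ^ cc k j)"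
      using mult_WT[where n=n and k=k and l=l and p=p, OF assms(2) posn p]
        mult_WD[where g="?g" and k=k and l=l and p=p, OF posg p] v[OF p]
        weight_phiL[OF assms(1,2) inL[OF p]] by simp
  qed
qed

section \<open>Analytic part\<close>

lemma cpow_nat: "n > 0 \<Longrightarrow> (of_nat n :: complex) powr z = exp (z * of_real (ln (real n)))"
  by (simp add: powr_def Ln_of_nat)

lemma cpow_prod:
  assumes "finite A" "\<And>j. j \<in> A \<Longrightarrow> g j > (0::nat)"
  shows "(of_nat (\<Prod>j\<in>A. g j ^ c j) :: complex) powr (- s) =
         (\<Prod>j\<in>A. of_nat (g j) powr (- (of_nat (c j) * s)))"
proof -
  have pos: "(\<Prod>j\<in>A. g j ^ c j) > 0" using assms by (auto intro!: prod_pos)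
  have "ln (real (\<Prod>j\<in>A. g j ^ c j)) = (\<Sum>j\<in>A. ln (real (g j ^ c j)))"
    unfolding of_nat_prod using assms by (subst ln_prod) auto
  also have "\<dots> = (\<Sum>j\<in>A. real (c j) * ln (real (g j)))"
    using assms by (intro sum.cong) (auto simp: ln_realpow)
  finally have L: "ln (real (\<Prod>j\<in>A. g j ^ c j)) = (\<Sum>j\<in>A. real (c j) * ln (real (g j)))" .
  have "(of_nat (\<Prod>j\<in>A. g j ^ c j) :: complex) powr (- s) =
        exp (\<Sum>j\<in>A. - (of_nat (c j) * s) * of_real (ln (real (g j))))"
    unfolding cpow_nat[OF pos] L of_real_sum sum_distrib_left
    by (intro arg_cong[where f = exp] sum.cong) auto
  also have "\<dots> = (\<Prod>j\<in>A. of_nat (g j) powr (- (of_nat (c j) * s)))"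
    unfolding exp_sum[OF assms(1)] using assms by (intro prod.cong) (auto simp: cpow_nat)
  finally show ?thesis .
qed

lemma abs_summable_cpow:
  assumes "Re z > 1" "A \<subseteq> UNIV"
  shows "(\<lambda>n::nat. norm ((of_nat n :: complex) powr (- z))) summable_on A"
proof -
  have eq: "(\<lambda>n::nat. norm ((of_nat n :: complex) powr (- z))) = (\<lambda>n. real n powr (- Re z))"
    by (rule ext, subst norm_powr_real_powr) auto
  have "summable (\<lambda>n. real n powr (- Re z))"
    using assms(1) by (subst summable_real_powr_iff) simp
  then have "(\<lambda>n. real n powr (- Re z)) summable_on UNIV"
    by (intro summable_nonneg_imp_summable_on) auto
  then show ?thesis unfolding eq by (rule summable_on_subset) simp
qed


lemma prod_infsum_eq:
  assumes "k > 0" "l > 0"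
  shows "(\<Prod>j\<in>{1..Suc l}. infsum (\<lambda>n. (of_nat n :: complex) powr (-(of_nat (cc k j) * s))) (Bset k l j))
       = F k l s * (\<Prod>j\<in>{2..Suc l}. zeta (of_nat (j * k) * s))"
proof -
  have "(\<Prod>j\<in>{1..Suc l}. infsum (\<lambda>n. (of_nat n :: complex) powr (-(of_nat (cc k j) * s))) (Bset k l j))
     = infsum (\<lambda>n. (of_nat n :: complex) powr (-(of_nat (cc k 1) * s))) (Bset k l 1) *
       (\<Prod>j\<in>{2..Suc l}. infsum (\<lambda>n. (of_nat n :: complex) powr (-(of_nat (cc k j) * s))) (Bset k l j))"
    by (subst prod.atLeast_Suc_atMost) (auto simp: numeral_2_eq_2)
  also have "infsum (\<lambda>n. (of_nat n :: complex) powr (-(of_nat (cc k 1) * s))) (Bset k l 1) = F k l s"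
    by (simp add: cc_def Bset_def F_def)
  also have "(\<Prod>j\<in>{2..Suc l}. infsum (\<lambda>n. (of_nat n :: complex) powr (-(of_nat (cc k j) * s))) (Bset k l j))
      = (\<Prod>j\<in>{2..Suc l}. zeta (of_nat (j * k) * s))"
    by (intro prod.cong) (auto simp: cc_def Bset_def zeta_def)
  finally show ?thesis .
qed

theorem theorem10:
  fixes k l :: nat and s :: complex
  assumes "k > 0" and "l > 0" and "Re s > 1"
  shows "((\<lambda>n. of_nat ((\<Prod>i\<in>{1..l}. n i ^ k) * n (Suc l)) powr (-s)) has_sum
           (F k l s * (\<Prod>j\<in>{2..Suc l}. zeta (of_nat (j * k) * s)))) (tuples k l)"
proof -
  let ?I = "{1..Suc l}"
  define hh where "hh j n = (of_nat n :: complex) powr (-(of_nat (cc k j) * s))" for j n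
  define H where "H g = (\<Prod>j\<in>?I. hh j (g j))" for g
  define \<Phi> where "\<Phi> = liftm ?I (phiL k l)"
  define S where "S = F k l s * (\<Prod>j\<in>{2..Suc l}. zeta (of_nat (j * k) * s))"
  have bij: "bij_betw \<Phi> (globset ?I (Lset k l)) (globset ?I (Rset k l))"
    unfolding \<Phi>_def
  proof (rule liftm_bij[where \<psi> = "psiR k l"])
    show "finite ?I" by simp
    show "phiL k l (\<lambda>i\<in>?I. 0) = (\<lambda>i\<in>?I. 0)" using phiL_zero[OF assms(1,2)] .
    show "psiR k l (\<lambda>i\<in>?I. 0) = (\<lambda>i\<in>?I. 0)" using psiR_zero[OF assms(1,2)] .
    show "\<And>a. a \<in> Lset k l \<Longrightarrow> phiL k l a \<in> Rset k l" using phiL_R[OF assms(1,2)] .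
    show "\<And>e. e \<in> Rset k l \<Longrightarrow> psiR k l e \<in> Lset k l" using psiR_L[OF assms(1,2)] .
    show "\<And>a. a \<in> Lset k l \<Longrightarrow> psiR k l (phiL k l a) = a" using psi_phi[OF assms(1,2)] .
    show "\<And>e. e \<in> Rset k l \<Longrightarrow> phiL k l (psiR k l e) = e" using phi_psi[OF assms(1,2)] .
    show "Lset k l \<subseteq> extensional ?I" by (auto simp: Lset_def)
    show "Rset k l \<subseteq> extensional ?I" by (auto simp: Rset_def)
  qed
  have absm: "(\<lambda>n. norm (hh j n)) summable_on Bset k l j" if "j \<in> ?I" for j
  proof -
    have "real (cc k j) \<ge> 1" using assms(1) that by (auto simp: cc_def)
    then have "real (cc k j) * Re s \<ge> 1 * Re s" using assms(3)
      by (intro mult_right_mono) auto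
    moreover have "Re (of_nat (cc k j) * s) = real (cc k j) * Re s" by simp
    ultimately have "Re (of_nat (cc k j) * s) > 1" using assms(3) by linarith
    then show ?thesis unfolding hh_def by (rule abs_summable_cpow) simp
  qed
  have old: "Infinite_Set_Sum.abs_summable_on (\<lambda>g. \<Prod>j\<in>?I. hh j (g j)) (PiE ?I (Bset k l))"
  proof (rule abs_summable_on_prod_PiE)
    show "finite ?I" by simp
    show "\<And>x. x \<in> ?I \<Longrightarrow> countable (Bset k l x)" by simp
    show "\<And>x. x \<in> ?I \<Longrightarrow> Infinite_Set_Sum.abs_summable_on (hh x) (Bset k l x)"
      using absm abs_summable_equivalent by blast
  qed
  have summ: "H summable_on PiE ?I (Bset k l)"
    using old abs_summable_equivalent abs_summable_summable unfolding H_def by blast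
  have val: "infsum H (PiE ?I (Bset k l)) = (\<Prod>j\<in>?I. infsum (hh j) (Bset k l j))"
    unfolding H_def by (rule infsum_prod_PiE_abs) (use absm in auto)
  have "(H has_sum S) (PiE ?I (Bset k l))"
    using has_sum_infsum[OF summ] val prod_infsum_eq[OF assms(1,2), of s]
    unfolding S_def hh_def by simp
  then have "(H has_sum S) (globset ?I (Rset k l))" using PiE_eq[OF assms(1,2)] by simp
  then have hsL: "((\<lambda>n. H (\<Phi> n)) has_sum S) (globset ?I (Lset k l))"
    by (simp only: has_sum_reindex_bij_betw[OF bij, of H S])
  have eq: "of_nat ((\<Prod>i\<in>{1..l}. n i ^ k) * n (Suc l)) powr (-s) = H (\<Phi> n)"
    if n: "n \<in> globset ?I (Lset k l)" for n
  proof -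
    have "of_nat ((\<Prod>i\<in>{1..l}. n i ^ k) * n (Suc l)) powr (-s) =
          (of_nat (\<Prod>j\<in>?I. \<Phi> n j ^ cc k j) :: complex) powr (-s)"
      using weight_transfer[OF assms(1,2) n] unfolding \<Phi>_def by simp
    also have "\<dots> = H (\<Phi> n)"
      unfolding H_def hh_def
      by (rule cpow_prod) (auto simp: \<Phi>_def intro: liftm_pos)
    finally show ?thesis .
  qed
  show ?thesis
    unfolding tuples_eq[OF assms(1,2)] S_def[symmetric]
    using hsL eq by (subst has_sum_cong) auto
qed

end
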